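(* Let $d\ge1$ and $t\ge1$ be integers, $M\ge1$, $\rho>0$, and let $f:[0,1]^d\to\mathbb{R}$ be $\rho$-Lipschitz with respect to the $1$-norm. Let $a_1,\dots,a_{(t+1)^d-1}$ be the coefficients produced by the construction described in the context. Then $|a_i|\le 2^{d-1}d\rho$ for every $i$.
   Context: Let $\sigma(z)=\max(z,0)$ and $k=(t+1)^d$. For an integer $0\le i\le k-1$ let $\boldsymbol\pi^i$ be its base-$(t+1)$ digit vector ($0\le\pi^i_r\le t$, $i=\sum_{r=1}^d\pi^i_r(t+1)^{d-r}$). For parameters $a_j,b_{1,j},\dots,b_{d,j}$ define $\hat g_j(\mathbf{x})=a_j\,\sigma\big(\sum_{r=1}^d -M\sigma(-x_r+b_{r,j})+\tfrac1t\big)$. Construction: set $b=f(\mathbf{0})$; for $i=1,\dots,k-1$ in order: let $\hat y=b+\sum_{j=1}^{i-1}\hat g_j(\boldsymbol\pi^i/t)$, set $b_{r,i}=\pi^i_r/t$ for $r=1,\dots,d$, and set $a_i=t\big(f(\boldsymbol\pi^i/t)-\hat y\big)$. $f$ is $\rho$-Lipschitz if $|f(\mathbf{x})-f(\mathbf{x}')|\le\rho\|\mathbf{x}-\mathbf{x}'\|_1$. *)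

theory Defs
  imports Complex_Main
begin

text \<open>Points of [0,1]^d are represented as functions nat => real, coordinates 1..d,
  all other coordinates being 0.\<close>

definition sig :: "real \<Rightarrow> real" where
  "sig z = max z 0"

definition unit_cube :: "nat \<Rightarrow> (nat \<Rightarrow> real) set" where
  "unit_cube d = {x. \<forall>r. (r \<in> {1..d} \<longrightarrow> 0 \<le> x r \<and> x r \<le> 1) \<and> (r \<notin> {1..d} \<longrightarrow> x r = 0)}"

definition lipschitz1_on :: "nat \<Rightarrow> real \<Rightarrow> ((nat \<Rightarrow> real) \<Rightarrow> real) \<Rightarrow> bool" where
  "lipschitz1_on d \<rho> f \<longleftrightarrow>
     (\<forall>x\<in>unit_cube d. \<forall>x'\<in>unit_cube d. \<bar>f x - f x'\<bar> \<le> \<rho> * (\<Sum>r=1..d. \<bar>x r - x' r\<bar>))"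

definition digit :: "nat \<Rightarrow> nat \<Rightarrow> nat \<Rightarrow> nat \<Rightarrow> nat" where
  "digit t d i r = (i div (t+1)^(d-r)) mod (t+1)"

definition grid :: "nat \<Rightarrow> nat \<Rightarrow> nat \<Rightarrow> (nat \<Rightarrow> real)" where
  "grid t d i = (\<lambda>r. if r \<in> {1..d} then real (digit t d i r) / real t else 0)"

definition ghat :: "nat \<Rightarrow> nat \<Rightarrow> real \<Rightarrow> real \<Rightarrow> (nat \<Rightarrow> real) \<Rightarrow> (nat \<Rightarrow> real) \<Rightarrow> real" where
  "ghat d t M a b x = a * sig ((\<Sum>r=1..d. - M * sig (- x r + b r)) + 1 / real t)"

primrec coefs :: "((nat \<Rightarrow> real) \<Rightarrow> real) \<Rightarrow> nat \<Rightarrow> nat \<Rightarrow> real \<Rightarrow> nat \<Rightarrow> real list" where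
  "coefs f d t M 0 = []"
| "coefs f d t M (Suc n) = coefs f d t M n @
     [real t * (f (grid t d (Suc n)) -
        (f (\<lambda>_. 0) + (\<Sum>j=1..n. ghat d t M (coefs f d t M n ! (j - 1)) (grid t d j) (grid t d (Suc n)))))]"

definition coef :: "((nat \<Rightarrow> real) \<Rightarrow> real) \<Rightarrow> nat \<Rightarrow> nat \<Rightarrow> real \<Rightarrow> nat \<Rightarrow> real" where
  "coef f d t M i = coefs f d t M i ! (i - 1)"

end

theory Submission
  imports Defs
begin


lemma digits_sum:
  fixes b i :: nat
  shows "(\<Sum>k<n. (i div b^k mod b) * b^k) = i mod b^n"
proof (induction n)
  case 0 then show ?case by simp
next
  case (Suc n)
  have "i mod b^Suc n = i mod (b^n * b)" by (simp add: mult.commute)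
  also have "\<dots> = b^n * (i div b^n mod b) + i mod b^n" by (rule mod_mult2_eq)
  finally show ?case using Suc by (simp add: mult.commute)
qed

lemma digits_bound:
  fixes b :: nat
  assumes "\<forall>k<n. e k < b"
  shows "(\<Sum>k<n. e k * b^k) < b^n"
  using assms
proof (induction n)
  case 0 then show ?case by simp
next
  case (Suc n)
  have IH: "(\<Sum>k<n. e k * b^k) < b^n" using Suc by simp
  have "Suc (e n) \<le> b" using Suc.prems[rule_format, of n] by simp
  then have "(Suc (e n)) * b^n \<le> b * b^n" by (rule mult_le_mono1)
  then show ?case using IH by simp
qed

lemma digits_extract:
  fixes b :: nat
  assumes "\<forall>k<n. e k < b" and "m < n"
  shows "((\<Sum>k<n. e k * b^k) div b^m) mod b = e m"
  using assms
proof (induction n arbitrary: e m)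
  case 0 then show ?case by simp
next
  case (Suc n)
  have b0: "e 0 < b" using Suc.prems by simp
  define s' where "s' = (\<Sum>k<n. e (Suc k) * b^k)"
  have eq: "(\<Sum>k<Suc n. e k * b^k) = e 0 + b * s'"
    unfolding s'_def by (simp add: sum.lessThan_Suc_shift sum_distrib_left mult.assoc mult.left_commute del: sum.lessThan_Suc)
  show ?case
  proof (cases m)
    case 0
    then show ?thesis using eq b0 by simp
  next
    case (Suc m')
    have d1: "(e 0 + b * s') div b = s'" using b0 by simp
    have "(e 0 + b * s') div b^m = ((e 0 + b * s') div b) div b^m'"
      using Suc by (simp add: div_mult2_eq)
    also have "\<dots> = s' div b^m'" using d1 by simp
    finally have "(e 0 + b * s') div b^m = s' div b^m'" .
    moreover have "(s' div b^m') mod b = e (Suc m')"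
      unfolding s'_def using Suc.IH[of "\<lambda>k. e (Suc k)" m'] Suc.prems Suc by simp
    ultimately show ?thesis using eq Suc by simp
  qed
qed

lemma sum_Pow_insert:
  fixes g :: "'a set \<Rightarrow> real"
  assumes "finite A" "a \<notin> A"
  shows "(\<Sum>S\<in>Pow (insert a A). g S) = (\<Sum>S\<in>Pow A. g S + g (insert a S))"
proof -
  have inj: "inj_on (insert a) (Pow A)" unfolding inj_on_def
  proof (intro ballI impI)
    fix x y assume "x \<in> Pow A" "y \<in> Pow A" "insert a x = insert a y"
    then show "x = y" using assms(2) by (metis PowD insert_ident subsetD)
  qed
  have disj: "Pow A \<inter> insert a ` Pow A = {}" using assms(2) by blast
  have "(\<Sum>S\<in>Pow (insert a A). g S) = (\<Sum>S\<in>Pow A. g S) + (\<Sum>S\<in>insert a ` Pow A. g S)"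
    unfolding Pow_insert using assms(1) disj by (simp add: sum.union_disjoint)
  also have "(\<Sum>S\<in>insert a ` Pow A. g S) = (\<Sum>S\<in>Pow A. g (insert a S))"
    using inj by (simp add: sum.reindex)
  finally show ?thesis by (simp add: sum.distrib)
qed

lemma sum_Pow_alt:
  assumes "finite U"
  shows "(\<Sum>S\<in>Pow U. (-1::real)^card S) = (if U = {} then 1 else 0)"
  using assms
proof (induction U rule: finite_induct)
  case empty then show ?case by simp
next
  case (insert a A)
  have "(\<Sum>S\<in>Pow (insert a A). (-1::real)^card S) = (\<Sum>S\<in>Pow A. (-1::real)^card S + (-1)^card (insert a S))"
    by (rule sum_Pow_insert[OF insert(1,2)])
  also have "\<dots> = 0"
  proof (rule sum.neutral, intro ballI)
    fix S assume "S \<in> Pow A"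
    then have "finite S" "a \<notin> S" using insert finite_subset by auto
    then show "(-1::real)^card S + (-1)^card (insert a S) = 0" by simp
  qed
  finally show ?case by simp
qed


definition lev :: "nat \<Rightarrow> (nat \<Rightarrow> nat) \<Rightarrow> (nat \<Rightarrow> nat) \<Rightarrow> bool" where
  "lev d q p \<longleftrightarrow> (\<forall>r\<in>{1..d}. q r \<le> p r)"

definition subv :: "(nat \<Rightarrow> nat) \<Rightarrow> nat set \<Rightarrow> (nat \<Rightarrow> nat)" where
  "subv p S = (\<lambda>r. p r - (if r \<in> S then 1 else 0))"

lemma mobius:
  fixes G C :: "(nat \<Rightarrow> nat) \<Rightarrow> real"
  assumes finV: "finite V"
    and hG: "\<And>q. q \<in> V \<Longrightarrow> G q = (\<Sum>q'\<in>{q'\<in>V. lev d q' q}. C q')"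
    and pV: "p \<in> V"
    and T: "T = {r\<in>{1..d}. p r > 0}"
    and closed: "\<And>S. S \<subseteq> T \<Longrightarrow> subv p S \<in> V"
    and eq: "\<And>q. q \<in> V \<Longrightarrow> (\<forall>r\<in>{1..d}. q r = p r) \<Longrightarrow> q = p"
  shows "(\<Sum>S\<in>Pow T. (-1)^card S * G (subv p S)) = C p"
proof -
  have finT: "finite T" using T by simp
  have "(\<Sum>S\<in>Pow T. (-1)^card S * G (subv p S))
      = (\<Sum>S\<in>Pow T. \<Sum>q\<in>V. (if lev d q (subv p S) then (-1)^card S * C q else 0))"
  proof (rule sum.cong[OF refl])
    fix S assume "S \<in> Pow T"
    then have "G (subv p S) = (\<Sum>q'\<in>{q'\<in>V. lev d q' (subv p S)}. C q')" using closed hG by auto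
    also have "\<dots> = (\<Sum>q\<in>V. if lev d q (subv p S) then C q else 0)"
      using finV by (simp add: sum.inter_filter)
    finally show "(-1)^card S * G (subv p S) = (\<Sum>q\<in>V. (if lev d q (subv p S) then (-1)^card S * C q else 0))"
      by (simp add: sum_distrib_left if_distrib cong: if_cong)
  qed
  also have "\<dots> = (\<Sum>q\<in>V. \<Sum>S\<in>Pow T. (if lev d q (subv p S) then (-1)^card S * C q else 0))"
    by (rule sum.swap)
  also have "\<dots> = (\<Sum>q\<in>V. if q = p then C q else 0)"
  proof (rule sum.cong[OF refl])
    fix q assume qV: "q \<in> V"
    define U where "U = {r\<in>T. q r < p r}"
    have key: "lev d q (subv p S) \<longleftrightarrow> lev d q p \<and> S \<subseteq> U" if "S \<subseteq> T" for S
    proof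
      assume h: "lev d q (subv p S)"
      have "lev d q p" using h unfolding lev_def subv_def by (metis diff_le_self le_trans)
      moreover have "S \<subseteq> U"
      proof
        fix r assume "r \<in> S"
        then have "r \<in> T" using that by auto
        then have "r \<in> {1..d}" "p r > 0" using T by auto
        then have "q r \<le> p r - (if r \<in> S then 1 else 0)" using h unfolding lev_def subv_def by blast
        then have "q r \<le> p r - 1" using \<open>r \<in> S\<close> by simp
        then show "r \<in> U" unfolding U_def using \<open>r \<in> T\<close> \<open>p r > 0\<close> by auto
      qed
      ultimately show "lev d q p \<and> S \<subseteq> U" by simp
    next
      assume h: "lev d q p \<and> S \<subseteq> U"
      show "lev d q (subv p S)" unfolding lev_def subv_def
      proof
        fix r assume r: "r \<in> {1..d}"
        show "q r \<le> p r - (if r \<in> S then 1 else 0)"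
        proof (cases "r \<in> S")
          case True then have "q r < p r" using h U_def by auto
          then show ?thesis using True by simp
        next
          case False then show ?thesis using h r lev_def by auto
        qed
      qed
    qed
    have "(\<Sum>S\<in>Pow T. (if lev d q (subv p S) then (-1)^card S * C q else 0))
        = (\<Sum>S\<in>Pow T. (if lev d q p \<and> S \<subseteq> U then (-1)^card S * C q else 0))"
      using key by (intro sum.cong) auto
    also have "\<dots> = (if lev d q p then (\<Sum>S\<in>Pow T. (if S \<subseteq> U then (-1)^card S * C q else 0)) else 0)"
      by simp
    also have "(\<Sum>S\<in>Pow T. (if S \<subseteq> U then (-1)^card S * C q else 0)) = (\<Sum>S\<in>{S\<in>Pow T. S \<subseteq> U}. (-1)^card S * C q)"
      using finT sum.inter_filter[of "Pow T" "\<lambda>S. (-1)^card S * C q" "\<lambda>S. S \<subseteq> U"] by simp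
    also have "{S\<in>Pow T. S \<subseteq> U} = Pow U" unfolding U_def by auto
    also have "(\<Sum>S\<in>Pow U. (-1)^card S * C q) = (\<Sum>S\<in>Pow U. (-1::real)^card S) * C q"
      by (simp add: sum_distrib_right)
    also have "\<dots> = (if U = {} then C q else 0)"
    proof -
      have "finite U" using finT U_def by simp
      then show ?thesis using sum_Pow_alt[of U] by simp
    qed
    finally have A: "(\<Sum>S\<in>Pow T. (if lev d q (subv p S) then (-1)^card S * C q else 0))
        = (if lev d q p \<and> U = {} then C q else 0)" by simp
    have "(lev d q p \<and> U = {}) \<longleftrightarrow> q = p"
    proof
      assume h: "lev d q p \<and> U = {}"
      have "\<forall>r\<in>{1..d}. q r = p r"
      proof
        fix r assume r: "r \<in> {1..d}"
        have "q r \<le> p r" using h r lev_def by auto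
        moreover have "\<not> q r < p r"
        proof
          assume "q r < p r"
          then have "r \<in> U" unfolding U_def T using r by auto
          then show False using h by auto
        qed
        ultimately show "q r = p r" by simp
      qed
      then show "q = p" using eq qV by blast
    next
      assume "q = p" then show "lev d q p \<and> U = {}" unfolding lev_def U_def by auto
    qed
    then show "(\<Sum>S\<in>Pow T. (if lev d q (subv p S) then (-1)^card S * C q else 0)) = (if q = p then C q else 0)"
      using A by simp
  qed
  also have "\<dots> = C p" using finV pV by (simp add: sum.delta)
  finally show ?thesis .
qed


definition dv :: "nat \<Rightarrow> nat \<Rightarrow> nat \<Rightarrow> (nat \<Rightarrow> nat)" where
  "dv t d i = (\<lambda>r. if r \<in> {1..d} then digit t d i r else 0)"

definition idx :: "nat \<Rightarrow> nat \<Rightarrow> (nat \<Rightarrow> nat) \<Rightarrow> nat" where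
  "idx t d p = (\<Sum>k<d. p (d - k) * (t+1)^k)"

definition validv :: "nat \<Rightarrow> nat \<Rightarrow> (nat \<Rightarrow> nat) \<Rightarrow> bool" where
  "validv t d p \<longleftrightarrow> (\<forall>r. (r \<in> {1..d} \<longrightarrow> p r \<le> t) \<and> (r \<notin> {1..d} \<longrightarrow> p r = 0))"

definition gv :: "nat \<Rightarrow> nat \<Rightarrow> (nat \<Rightarrow> nat) \<Rightarrow> (nat \<Rightarrow> real)" where
  "gv t d p = (\<lambda>r. if r \<in> {1..d} then real (p r) / real t else 0)"

lemma dv_valid: "validv t d (dv t d i)"
  unfolding validv_def dv_def digit_def
  by (metis less_Suc_eq_le mod_less_divisor zero_less_Suc Suc_eq_plus1)

lemma idx_dv:
  assumes "i < (t+1)^d"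
  shows "idx t d (dv t d i) = i"
proof -
  have "idx t d (dv t d i) = (\<Sum>k<d. (i div (t+1)^k mod (t+1)) * (t+1)^k)"
    unfolding idx_def
  proof (rule sum.cong[OF refl])
    fix k assume "k \<in> {..<d}"
    then have "d - k \<in> {1..d}" "d - (d - k) = k" by auto
    then show "dv t d i (d - k) * (t + 1) ^ k = i div (t + 1) ^ k mod (t + 1) * (t + 1) ^ k"
      unfolding dv_def digit_def by simp
  qed
  also have "\<dots> = i mod (t+1)^d" by (rule digits_sum)
  also have "\<dots> = i" using assms by simp
  finally show ?thesis .
qed

lemma idx_lt:
  assumes "validv t d p"
  shows "idx t d p < (t+1)^d"
  unfolding idx_def
proof (rule digits_bound, intro allI impI)
  fix k assume "k < d"
  then have "d - k \<in> {1..d}" by auto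
  then show "p (d - k) < t + 1" using assms unfolding validv_def by auto
qed

lemma dv_idx:
  assumes "validv t d p"
  shows "dv t d (idx t d p) = p"
proof
  fix r
  show "dv t d (idx t d p) r = p r"
  proof (cases "r \<in> {1..d}")
    case False then show ?thesis using assms unfolding dv_def validv_def by auto
  next
    case True
    have e: "\<forall>k<d. p (d - k) < t + 1"
    proof (intro allI impI)
      fix k assume "k < d"
      then have "d - k \<in> {1..d}" by auto
      then show "p (d - k) < t + 1" using assms unfolding validv_def by auto
    qed
    have "d - r < d" using True by auto
    from digits_extract[OF e this] have "(idx t d p div (t+1)^(d-r)) mod (t+1) = p (d - (d - r))"
      unfolding idx_def .
    also have "d - (d - r) = r" using True by auto
    finally show ?thesis using True unfolding dv_def digit_def by simp
  qed
qed

lemma idx_mono: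
  assumes "lev d p q"
  shows "idx t d p \<le> idx t d q"
  unfolding idx_def
proof (rule sum_mono)
  fix k assume "k \<in> {..<d}"
  then have "d - k \<in> {1..d}" by auto
  then have "p (d-k) \<le> q (d-k)" using assms unfolding lev_def by auto
  then show "p (d - k) * (t + 1) ^ k \<le> q (d - k) * (t + 1) ^ k" by simp
qed

lemma grid_eq: "grid t d i = gv t d (dv t d i)"
  unfolding grid_def gv_def dv_def by auto

lemma ghat_eval:
  assumes t: "t \<ge> 1" and M: "M \<ge> 1"
  shows "ghat d t M a (grid t d j) (grid t d i) = (if lev d (dv t d j) (dv t d i) then a / real t else 0)"
proof -
  let ?x = "grid t d i" and ?b = "grid t d j"
  have tp: "real t > 0" using t by simp
  have hterm: "- ?x r + ?b r = (real (dv t d j r) - real (dv t d i r)) / real t" if "r \<in> {1..d}" for r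
    using that unfolding grid_def dv_def by (simp add: diff_divide_distrib)
  show ?thesis
  proof (cases "lev d (dv t d j) (dv t d i)")
    case True
    have "(\<Sum>r=1..d. - M * sig (- ?x r + ?b r)) = 0"
    proof (rule sum.neutral, intro ballI)
      fix r assume r: "r \<in> {1..d}"
      have "real (dv t d j r) \<le> real (dv t d i r)" using True r unfolding lev_def by auto
      then have "(real (dv t d j r) - real (dv t d i r)) / real t \<le> 0" using tp
        by (simp add: divide_nonpos_pos)
      then have "sig (- ?x r + ?b r) = 0" using hterm[OF r] unfolding sig_def by simp
      then show "- M * sig (- ?x r + ?b r) = 0" by simp
    qed
    then show ?thesis using True tp unfolding ghat_def sig_def by simp
  next
    case False
    then obtain r0 where r0: "r0 \<in> {1..d}" "dv t d j r0 > dv t d i r0" unfolding lev_def by auto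
    have ge: "real (dv t d j r0) - real (dv t d i r0) \<ge> 1" using r0(2) by linarith
    have s0: "sig (- ?x r0 + ?b r0) \<ge> 1 / real t"
      using hterm[OF r0(1)] ge tp unfolding sig_def by (simp add: divide_right_mono)
    have nonneg: "sig z \<ge> 0" for z unfolding sig_def by simp
    have "(\<Sum>r=1..d. - M * sig (- ?x r + ?b r)) = - M * sig (- ?x r0 + ?b r0) + (\<Sum>r\<in>{1..d}-{r0}. - M * sig (- ?x r + ?b r))"
      using r0(1) by (simp add: sum.remove)
    also have "(\<Sum>r\<in>{1..d}-{r0}. - M * sig (- ?x r + ?b r)) \<le> 0"
      using M nonneg by (intro sum_nonpos) (simp add: mult_nonneg_nonneg)
    also have "- M * sig (- ?x r0 + ?b r0) \<le> - 1 * (1 / real t)"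
    proof -
      have "1 * (1 / real t) \<le> M * sig (- ?x r0 + ?b r0)"
        using M s0 tp by (intro mult_mono) auto
      then show ?thesis by simp
    qed
    finally have "(\<Sum>r=1..d. - M * sig (- ?x r + ?b r)) + 1 / real t \<le> 0" by simp
    then show ?thesis using False unfolding ghat_def sig_def by simp
  qed
qed

lemma coefs_len: "length (coefs f d t M n) = n"
  by (induction n) auto

lemma coefs_nth: "k < n \<Longrightarrow> n \<le> m \<Longrightarrow> coefs f d t M m ! k = coefs f d t M n ! k"
proof (induction m)
  case 0 then show ?case by simp
next
  case (Suc m)
  show ?case
  proof (cases "n \<le> m")
    case True
    then have "coefs f d t M (Suc m) ! k = coefs f d t M m ! k"
      using Suc.prems by (simp add: nth_append coefs_len)
    then show ?thesis using Suc True by simp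
  next
    case False then have "n = Suc m" using Suc.prems by simp
    then show ?thesis by simp
  qed
qed

lemma coef_rec:
  "coef f d t M (Suc n) = real t * (f (grid t d (Suc n)) -
        (f (\<lambda>_. 0) + (\<Sum>j=1..n. ghat d t M (coef f d t M j) (grid t d j) (grid t d (Suc n)))))"
proof -
  have "(\<Sum>j=1..n. ghat d t M (coefs f d t M n ! (j - 1)) (grid t d j) (grid t d (Suc n)))
      = (\<Sum>j=1..n. ghat d t M (coef f d t M j) (grid t d j) (grid t d (Suc n)))"
  proof (rule sum.cong[OF refl])
    fix j assume "j \<in> {1..n}"
    then have "coefs f d t M n ! (j - 1) = coef f d t M j"
      unfolding coef_def using coefs_nth[of "j-1" j n] by auto
    then show "ghat d t M (coefs f d t M n ! (j - 1)) (grid t d j) (grid t d (Suc n)) = ghat d t M (coef f d t M j) (grid t d j) (grid t d (Suc n))" by simp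
  qed
  then show ?thesis unfolding coef_def by (simp add: nth_append coefs_len)
qed


lemma dv_zero: "dv t d 0 = (\<lambda>_. 0)"
  unfolding dv_def digit_def by auto

lemma grid_zero: "grid t d 0 = (\<lambda>_. 0)"
  unfolding grid_def digit_def by auto

lemma idx_le_of_lev:
  assumes "i < (t+1)^d" "j < (t+1)^d" "lev d (dv t d j) (dv t d i)"
  shows "j \<le> i"
  using idx_mono[OF assms(3), of t] idx_dv[OF assms(1)] idx_dv[OF assms(2)] by simp

lemma F_formula:
  assumes t: "t \<ge> 1" and M: "M \<ge> 1" and i: "i < (t+1)^d"
  shows "f (grid t d i) = (\<Sum>j\<in>{j. j < (t+1)^d \<and> lev d (dv t d j) (dv t d i)}.
            (if j = 0 then f (\<lambda>_. 0) else coef f d t M j / real t))"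
proof -
  define c where "c j = (if j = 0 then f (\<lambda>_. 0) else coef f d t M j / real t)" for j
  define g where "g j = (if lev d (dv t d j) (dv t d i) then c j else 0)" for j
  have set_eq: "{j. j < (t+1)^d \<and> lev d (dv t d j) (dv t d i)} = {j\<in>{..i}. lev d (dv t d j) (dv t d i)}"
    using idx_le_of_lev[OF i] i by auto
  have "(\<Sum>j\<in>{j. j < (t+1)^d \<and> lev d (dv t d j) (dv t d i)}. c j) = (\<Sum>j\<in>{..i}. g j)"
    unfolding set_eq g_def using sum.inter_filter[of "{..i}" c "\<lambda>j. lev d (dv t d j) (dv t d i)"] by simp
  also have "\<dots> = f (grid t d i)"
  proof (cases i)
    case 0
    have "lev d (dv t d 0) (dv t d 0)" unfolding lev_def by simp
    then show ?thesis using 0 by (simp add: g_def c_def grid_zero)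
  next
    case (Suc n)
    have tp: "real t > 0" using t by simp
    have g0: "g 0 = f (\<lambda>_. 0)" unfolding g_def c_def lev_def by (simp add: dv_zero)
    have gi: "g (Suc n) = coef f d t M (Suc n) / real t"
      unfolding g_def c_def lev_def Suc by simp
    have gs: "(\<Sum>j=1..n. g j) = (\<Sum>j=1..n. ghat d t M (coef f d t M j) (grid t d j) (grid t d (Suc n)))"
      by (rule sum.cong[OF refl]) (auto simp: g_def c_def ghat_eval[OF t M] Suc)
    have "{..n} = insert 0 {1..n}" by auto
    then have s1: "(\<Sum>j\<in>{..n}. g j) = g 0 + (\<Sum>j=1..n. g j)" by simp
    have "(\<Sum>j\<in>{..i}. g j) = (\<Sum>j\<in>{..n}. g j) + g (Suc n)" using Suc by simp
    also have "\<dots> = f (\<lambda>_. 0) + (\<Sum>j=1..n. ghat d t M (coef f d t M j) (grid t d j) (grid t d (Suc n)))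
                    + coef f d t M (Suc n) / real t" using s1 g0 gi gs by simp
    also have "\<dots> = f (grid t d i)" using coef_rec[of f d t M n] tp Suc by simp
    finally show ?thesis .
  qed
  finally show ?thesis unfolding c_def by simp
qed


theorem lemmaA6:
  fixes d t :: nat and M \<rho> :: real and f :: "(nat \<Rightarrow> real) \<Rightarrow> real"
  assumes "d \<ge> 1" and "t \<ge> 1" and "M \<ge> 1" and "\<rho> > 0"
    and "lipschitz1_on d \<rho> f"
    and "1 \<le> i" and "i \<le> (t+1)^d - 1"
  shows "\<bar>coef f d t M i\<bar> \<le> 2^(d-1) * real d * \<rho>"
proof -
  note d1 = assms(1) and t1 = assms(2) and M1 = assms(3) and rho = assms(4) and lip = assms(5)
  define N where "N = (t+1)^d"
  have Npos: "N > 0" unfolding N_def by simp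
  have iN: "i < N" using assms(7) Npos unfolding N_def[symmetric] by linarith
  have tp: "real t > 0" using t1 by simp
  define c where "c j = (if j = 0 then f (\<lambda>_. 0) else coef f d t M j / real t)" for j
  define V where "V = {p. validv t d p}"
  define G where "G p = f (grid t d (idx t d p))" for p
  define C where "C p = c (idx t d p)" for p
  have V_img: "V = dv t d ` {..<N}"
  proof
    show "V \<subseteq> dv t d ` {..<N}"
    proof
      fix p assume "p \<in> V"
      then have "validv t d p" unfolding V_def by simp
      then show "p \<in> dv t d ` {..<N}" using dv_idx idx_lt unfolding N_def
        by (metis image_eqI lessThan_iff)
    qed
    show "dv t d ` {..<N} \<subseteq> V" unfolding V_def using dv_valid by auto
  qed
  have finV: "finite V" using V_img by simp
  have injV: "inj_on (idx t d) V"
    unfolding inj_on_def V_def by (metis dv_idx mem_Collect_eq)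
  have hG: "G q = (\<Sum>q'\<in>{q'\<in>V. lev d q' q}. C q')" if qV: "q \<in> V" for q
  proof -
    have vq: "validv t d q" using qV V_def by simp
    have "G q = (\<Sum>j\<in>{j. j < N \<and> lev d (dv t d j) q}. c j)"
      unfolding G_def c_def N_def using F_formula[OF t1 M1 idx_lt[OF vq], of f] dv_idx[OF vq] by simp
    also have "{j. j < N \<and> lev d (dv t d j) q} = idx t d ` {q'\<in>V. lev d q' q}"
    proof
      show "{j. j < N \<and> lev d (dv t d j) q} \<subseteq> idx t d ` {q'\<in>V. lev d q' q}"
      proof
        fix j assume "j \<in> {j. j < N \<and> lev d (dv t d j) q}"
        then have "j < N" "lev d (dv t d j) q" by auto
        then show "j \<in> idx t d ` {q'\<in>V. lev d q' q}"
          using idx_dv[of j t d] dv_valid[of t d j] unfolding N_def V_def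
          by (metis (mono_tags, lifting) image_eqI mem_Collect_eq)
      qed
      show "idx t d ` {q'\<in>V. lev d q' q} \<subseteq> {j. j < N \<and> lev d (dv t d j) q}"
        using idx_lt dv_idx unfolding V_def N_def by auto
    qed
    also have "(\<Sum>j\<in>idx t d ` {q'\<in>V. lev d q' q}. c j) = (\<Sum>q'\<in>{q'\<in>V. lev d q' q}. C q')"
      unfolding C_def using injV by (subst sum.reindex) (auto intro: inj_on_subset)
    finally show ?thesis .
  qed
  define p where "p = dv t d i"
  have vp: "validv t d p" unfolding p_def by (rule dv_valid)
  have pV: "p \<in> V" using vp V_def by simp
  define T where "T = {r\<in>{1..d}. p r > 0}"
  have closed: "subv p S \<in> V" if "S \<subseteq> T" for S
    using vp unfolding V_def validv_def subv_def by (auto intro: le_trans[OF diff_le_self])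
  have eqp: "q = p" if "q \<in> V" "\<forall>r\<in>{1..d}. q r = p r" for q
  proof
    fix r show "q r = p r" using that vp unfolding V_def validv_def by (cases "r \<in> {1..d}") auto
  qed
  have mob: "(\<Sum>S\<in>Pow T. (-1)^card S * G (subv p S)) = C p"
    by (rule mobius[OF finV hG pV T_def closed eqp]) auto
  have Cp: "C p = coef f d t M i / real t"
    unfolding C_def p_def c_def using idx_dv[of i t d] iN assms(6) N_def by simp
  have "T \<noteq> {}"
  proof
    assume "T = {}"
    then have "\<forall>r\<in>{1..d}. p r = 0" unfolding T_def by auto
    then have "idx t d p = 0" unfolding idx_def by (intro sum.neutral) auto
    then show False using idx_dv[of i t d] iN assms(6) N_def p_def by simp
  qed
  then obtain r0 where r0: "r0 \<in> T" by auto
  define T' where "T' = T - {r0}"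
  have finT': "finite T'" unfolding T'_def T_def by simp
  have TT': "T = insert r0 T'" "r0 \<notin> T'" using r0 unfolding T'_def by auto
  have Gf: "G q = f (gv t d q)" if "q \<in> V" for q
    unfolding G_def using that V_def grid_eq dv_idx by simp
  have cube: "gv t d q \<in> unit_cube d" if "q \<in> V" for q
    using that tp unfolding V_def validv_def gv_def unit_cube_def by auto
  have pr0: "p r0 \<ge> 1" "r0 \<in> {1..d}" using r0 T_def by auto
  have bound1: "\<bar>G (subv p S) - G (subv p (insert r0 S))\<bar> \<le> \<rho> / real t" if S: "S \<in> Pow T'" for S
  proof -
    have r0S: "r0 \<notin> S" using S TT' by auto
    have ST: "S \<subseteq> T" "insert r0 S \<subseteq> T" using S TT' by auto
    have "\<bar>G (subv p S) - G (subv p (insert r0 S))\<bar>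
          \<le> \<rho> * (\<Sum>r=1..d. \<bar>gv t d (subv p S) r - gv t d (subv p (insert r0 S)) r\<bar>)"
      using lip cube closed ST Gf unfolding lipschitz1_on_def by simp
    also have "(\<Sum>r=1..d. \<bar>gv t d (subv p S) r - gv t d (subv p (insert r0 S)) r\<bar>)
             = (\<Sum>r=1..d. if r = r0 then 1 / real t else 0)"
    proof (rule sum.cong[OF refl])
      fix r assume r: "r \<in> {1..d}"
      show "\<bar>gv t d (subv p S) r - gv t d (subv p (insert r0 S)) r\<bar> = (if r = r0 then 1 / real t else 0)"
      proof (cases "r = r0")
        case True
        have "real (p r0) - real (p r0 - 1) = 1" using pr0 by simp
        then have "real (p r0) / real t - real (p r0 - 1) / real t = 1 / real t"
          by (metis diff_divide_distrib)
        then show ?thesis using True r r0S tp unfolding gv_def subv_def by simp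
      next
        case False
        then show ?thesis using r unfolding gv_def subv_def by simp
      qed
    qed
    also have "\<dots> = 1 / real t" using pr0(2) by simp
    finally show ?thesis by simp
  qed
  have "coef f d t M i / real t = (\<Sum>S\<in>Pow T'. (-1)^card S * G (subv p S) + (-1)^card (insert r0 S) * G (subv p (insert r0 S)))"
    using mob Cp sum_Pow_insert[OF finT' TT'(2)] TT'(1) by simp
  also have "\<dots> = (\<Sum>S\<in>Pow T'. (-1)^card S * (G (subv p S) - G (subv p (insert r0 S))))"
  proof (rule sum.cong[OF refl])
    fix S assume "S \<in> Pow T'"
    then have "finite S" "r0 \<notin> S" using finT' TT' finite_subset by auto
    then show "(-1)^card S * G (subv p S) + (-1)^card (insert r0 S) * G (subv p (insert r0 S))
        = (-1)^card S * (G (subv p S) - G (subv p (insert r0 S)))" by (simp add: algebra_simps)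
  qed
  finally have ceq: "coef f d t M i / real t = (\<Sum>S\<in>Pow T'. (-1)^card S * (G (subv p S) - G (subv p (insert r0 S))))" .
  have "\<bar>coef f d t M i / real t\<bar> \<le> (\<Sum>S\<in>Pow T'. \<bar>(-1)^card S * (G (subv p S) - G (subv p (insert r0 S)))\<bar>)"
    unfolding ceq by (rule sum_abs)
  also have "\<dots> \<le> (\<Sum>S\<in>Pow T'. \<rho> / real t)"
    using bound1 by (intro sum_mono) (simp add: abs_mult power_abs)
  also have "\<dots> = 2 ^ card T' * (\<rho> / real t)" using finT' by (simp add: card_Pow)
  also have "\<dots> \<le> 2 ^ (d - 1) * (\<rho> / real t)"
  proof -
    have "card T \<le> card {1..d}" unfolding T_def by (rule card_mono) auto
    then have "card T \<le> d" by simp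
    then have "card T' \<le> d - 1" unfolding T'_def using r0 by (simp add: card_Diff_singleton_if)
    then have "(2::real) ^ card T' \<le> 2 ^ (d - 1)" by (rule power_increasing) simp
    then show ?thesis using rho tp by (intro mult_right_mono) auto
  qed
  finally have "\<bar>coef f d t M i\<bar> / real t \<le> 2 ^ (d - 1) * \<rho> / real t" by simp
  then have "\<bar>coef f d t M i\<bar> \<le> 2 ^ (d - 1) * \<rho>" using tp by (simp add: divide_le_cancel)
  also have "\<dots> \<le> 2 ^ (d - 1) * real d * \<rho>"
  proof -
    have "(2::real) ^ (d - 1) * \<rho> * 1 \<le> 2 ^ (d - 1) * \<rho> * real d"
      using d1 rho by (intro mult_left_mono) auto
    then show ?thesis by (simp add: algebra_simps)
  qed
  finally show ?thesis .
qed

end
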